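(* Let $\kappa$ be an ordinal of uncountable cofinality and let $Z$, $Z_Y$ be as described in the context. Suppose given, for all $\beta < \alpha$ in $[2,\kappa)$, morphisms $u^\beta_\alpha: \beta \to \alpha$ of $Z_Y$ such that $u^\gamma_\alpha = u^\beta_\alpha u^\gamma_\beta$ for all $\gamma < \beta < \alpha$ in $[2,\kappa)$. Then there exists a pair $\beta < \alpha$ in $[2,\kappa)$ such that $u^\beta_\alpha$ passes through some vertex $\gamma$ with $\gamma < \beta$.
   Context: For an ordinal $\alpha \ge 2$ let $G_\alpha$ be the free group on the set $\alpha$; for $\gamma \le \alpha$ let $D^\gamma_\alpha: G_\gamma \to G_\alpha$ be the natural inclusion. Let $Z$ be the groupoid with object set $[2,\kappa)$ generated by: the elements of $G_\alpha$ as automorphisms of the object $\alpha$; and, for each pair $\alpha \neq \beta$ in $[2,\kappa)$, a morphism $y^\beta_\alpha: \beta \to \alpha$; subject to the relations of each group $G_\alpha$ and the relations $y^\beta_\alpha \, D^{\varepsilon}_\beta(a)\, y^\alpha_\beta = D^{\varepsilon}_\alpha(a)$ for all $a \in G_\varepsilon$, $\varepsilon = \min(\alpha,\beta)$ (so $y^\alpha_\beta = (y^\beta_\alpha)^{-1}$). $Z_Y$ is the subgroupoid of $Z$ generated by the edges $y^\beta_\alpha$; every morphism of $Z_Y$ can be uniquely written as a reduced word in the generators $y^\beta_\alpha$ (i.e. $Z_Y$ is the free groupoid on the edges, with $y^\alpha_\beta$ the inverse of $y^\beta_\alpha$). A morphism of $Z_Y$ passes through a vertex $\delta$ if its reduced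 word involves a generator with source or target $\delta$; the identity $\mathrm{id}_\delta$ passes through $\delta$ and no other vertex. *)

theory Defs
  imports Main "HOL-Library.Countable_Set"
begin

text \<open>Vertices of the groupoid are the elements of a well-ordered type 'a, standing
for the ordinal interval [2,kappa).  A generator y^b_a : b -> a is encoded as the
pair (b, a) (source, target), with b \<noteq> a; its inverse y^a_b is (a, b).
A word is a list of generators in order of traversal (first applied first).\<close>

definition edge_inv :: "'a \<times> 'a \<Rightarrow> 'a \<times> 'a" where
  "edge_inv e = (snd e, fst e)"

text \<open>Well-formed composable word from s to t (a morphism s -> t of the free
groupoid on the complete graph, before reduction).\<close>
definition zy_word :: "'a \<Rightarrow> 'a \<Rightarrow> ('a \<times> 'a) list \<Rightarrow> bool" where
  "zy_word s t w \<longleftrightarrow>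
     (w = [] \<longrightarrow> s = t) \<and>
     (w \<noteq> [] \<longrightarrow> fst (hd w) = s \<and> snd (last w) = t) \<and>
     (\<forall>e\<in>set w. fst e \<noteq> snd e) \<and>
     (\<forall>i. Suc i < length w \<longrightarrow> snd (w ! i) = fst (w ! Suc i))"

definition reduced_word :: "('a \<times> 'a) list \<Rightarrow> bool" where
  "reduced_word w \<longleftrightarrow> (\<forall>i. Suc i < length w \<longrightarrow> w ! Suc i \<noteq> edge_inv (w ! i))"

text \<open>Morphisms s -> t of Z_Y, given by their unique reduced words.\<close>
definition zy_mor :: "'a \<Rightarrow> 'a \<Rightarrow> ('a \<times> 'a) list \<Rightarrow> bool" where
  "zy_mor s t w \<longleftrightarrow> zy_word s t w \<and> reduced_word w"

fun free_reduce :: "('a \<times> 'a) list \<Rightarrow> ('a \<times> 'a) list" where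
  "free_reduce [] = []"
| "free_reduce (x # xs) =
     (case free_reduce xs of
        [] \<Rightarrow> [x]
      | y # zs \<Rightarrow> (if y = edge_inv x then zs else x # y # zs))"

text \<open>Groupoid composition  v \<circ> w  (first w, then v), on reduced words.\<close>
definition zy_comp :: "('a \<times> 'a) list \<Rightarrow> ('a \<times> 'a) list \<Rightarrow> ('a \<times> 'a) list" where
  "zy_comp v w = free_reduce (w @ v)"

definition passes_through :: "'a \<Rightarrow> ('a \<times> 'a) list \<Rightarrow> 'a \<Rightarrow> bool" where
  "passes_through s w d \<longleftrightarrow>
     (w = [] \<and> d = s) \<or> (\<exists>e\<in>set w. fst e = d \<or> snd e = d)"

definition uncountable_cof :: "'a::wellorder itself \<Rightarrow> bool" where
  "uncountable_cof _ \<longleftrightarrow> (\<forall>S::'a set. countable S \<longrightarrow> (\<exists>v. \<forall>s\<in>S. s < v))"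

end

theory Submission
  imports Defs
begin

lemma reduced_tl:
  assumes h: "reduced_word (x # w)" shows "reduced_word w"
  unfolding reduced_word_def
proof (intro allI impI)
  fix i assume "Suc i < length w"
  then show "w ! Suc i \<noteq> edge_inv (w ! i)"
    using h unfolding reduced_word_def by (auto dest: spec[of _ "Suc i"])
qed

lemma reduced_head:
  assumes h: "reduced_word (x # y # w)" shows "y \<noteq> edge_inv x"
  using h unfolding reduced_word_def by (auto dest: spec[of _ 0])

lemma free_reduce_id: "reduced_word v \<Longrightarrow> free_reduce v = v"
proof (induction v)
  case Nil then show ?case by simp
next
  case (Cons x v)
  then have IH: "free_reduce v = v" using reduced_tl by blast
  show ?case
  proof (cases v)
    case Nil then show ?thesis using IH by simp
  next
    case (Cons y zs)
    then show ?thesis using IH reduced_head[of x y zs] Cons.prems by simp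
  qed
qed

lemma free_reduce_app:
  assumes "reduced_word w" "reduced_word v"
  shows "\<exists>i j. free_reduce (w @ v) = take i w @ drop j v"
  using assms(1)
proof (induction w)
  case Nil
  then show ?case using free_reduce_id[OF assms(2)] by (metis append_Nil drop0 take0)
next
  case (Cons x w)
  then obtain i j where ij: "free_reduce (w @ v) = take i w @ drop j v"
    using reduced_tl by blast
  show ?case
  proof (cases "free_reduce (w @ v)")
    case Nil
    then have "free_reduce ((x # w) @ v) = take 1 (x # w) @ drop (length v) v" by simp
    then show ?thesis by blast
  next
    case (Cons y zs)
    show ?thesis
    proof (cases "y = edge_inv x")
      case True
      have "take i w = []"
      proof (rule ccontr)
        assume ne: "take i w \<noteq> []"
        then have "w \<noteq> []" by auto
        then obtain a w' where w: "w = a # w'" by (cases w) auto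
        have "y = a" using Cons ij ne w by (cases i) auto
        then show False using reduced_head[of x a w'] Cons.prems w True by simp
      qed
      then have "y # zs = drop j v" using ij Cons by simp
      then have "zs = drop (Suc j) v" by (metis drop_Suc list.sel(3) tl_drop)
      then have "free_reduce ((x # w) @ v) = take 0 (x # w) @ drop (Suc j) v"
        using Cons True by simp
      then show ?thesis by blast
    next
      case False
      then have "free_reduce ((x # w) @ v) = x # free_reduce (w @ v)" using Cons by simp
      also have "\<dots> = take (Suc i) (x # w) @ drop j v" using ij by simp
      finally show ?thesis by blast
    qed
  qed
qed

definition verts :: "('a \<times> 'a) list \<Rightarrow> 'a set" where
  "verts w = fst ` set w \<union> snd ` set w"

lemma finite_verts: "finite (verts w)" unfolding verts_def by simp

theorem lemma3p13:
  fixes u :: "'a::wellorder \<Rightarrow> 'a \<Rightarrow> ('a \<times> 'a) list"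
  assumes cof: "uncountable_cof TYPE('a)"
    and mor: "\<And>\<alpha> \<beta>. \<beta> < \<alpha> \<Longrightarrow> zy_mor \<beta> \<alpha> (u \<alpha> \<beta>)"
    and coh: "\<And>\<alpha> \<beta> \<gamma>. \<gamma> < \<beta> \<Longrightarrow> \<beta> < \<alpha> \<Longrightarrow> u \<alpha> \<gamma> = zy_comp (u \<alpha> \<beta>) (u \<beta> \<gamma>)"
  shows "\<exists>\<alpha> \<beta> \<gamma>. \<beta> < \<alpha> \<and> \<gamma> < \<beta> \<and> passes_through \<beta> (u \<alpha> \<beta>) \<gamma>"
proof (rule ccontr)
  assume "\<not> ?thesis"
  note neg = this
  have np: "\<beta> \<le> x" if h1: "\<beta> < \<alpha>" and h2: "x \<in> verts (u \<alpha> \<beta>)" for \<alpha> \<beta> x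
  proof (rule ccontr)
    assume "\<not> \<beta> \<le> x"
    then have xb: "x < \<beta>" by simp
    have "\<exists>e\<in>set (u \<alpha> \<beta>). fst e = x \<or> snd e = x" using h2 unfolding verts_def by force
    then have "passes_through \<beta> (u \<alpha> \<beta>) x" unfolding passes_through_def by blast
    then show False using neg h1 xb by blast
  qed
  have bnd: "\<And>S::'a set. countable S \<Longrightarrow> \<exists>v. \<forall>s\<in>S. s < v"
    using cof unfolding uncountable_cof_def by blast
  define c :: 'a where "c = undefined"
  define nx :: "'a \<Rightarrow> 'a" where "nx = (\<lambda>b. SOME v. \<forall>s\<in>insert b (verts (u b c)). s < v)"
  have nx: "\<And>b. \<forall>s\<in>insert b (verts (u b c)). s < nx b"
  proof -
    fix b
    have "countable (insert b (verts (u b c)))" using countable_finite[OF finite_verts[of "u b c"]] by simp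
    then obtain v where "\<forall>s\<in>insert b (verts (u b c)). s < v" using bnd by blast
    then show "\<forall>s\<in>insert b (verts (u b c)). s < nx b"
      unfolding nx_def by (rule someI)
  qed
  define b0 where "b0 = (SOME v. \<forall>s\<in>{c}. s < v)"
  have "countable {c}" by simp
  then obtain v0 where "\<forall>s\<in>{c}. s < v0" using bnd by blast
  then have "\<forall>s\<in>{c}. s < b0" unfolding b0_def by (rule someI)
  then have b0: "c < b0" by simp
  define b :: "nat \<Rightarrow> 'a" where "b = rec_nat b0 (\<lambda>_ x. nx x)"
  have b0': "b 0 = b0" and bS: "\<And>n. b (Suc n) = nx (b n)" unfolding b_def by simp_all
  have binc: "\<And>n. b n < b (Suc n)" using nx bS by simp
  have bmono: "b m \<le> b n" if "m \<le> n" for m n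
    using lift_Suc_mono_le[of b, OF _ that] binc less_imp_le by blast
  have cb: "\<And>n. c < b n" using b0 b0' bmono by (metis le0 order_less_le_trans)
  have "countable (range b)" by (rule countable_image) simp
  then have ex: "\<exists>v. \<forall>s\<in>range b. s < v" using bnd by blast
  define \<alpha> where "\<alpha> = (LEAST v. \<forall>s\<in>range b. s < v)"
  have ab: "\<And>n. b n < \<alpha>" using LeastI_ex[OF ex] unfolding \<alpha>_def by blast
  have below: "\<And>x. x < \<alpha> \<Longrightarrow> \<exists>k. x < b k"
  proof (rule ccontr)
    fix x assume xa: "x < \<alpha>" and "\<not> (\<exists>k. x < b k)"
    then have "\<And>k. b k \<le> x" by (simp add: not_less)
    then have "\<forall>s\<in>range b. s < x" using binc by (metis imageE order_less_le_trans)
    then have "\<alpha> \<le> x" unfolding \<alpha>_def by (rule Least_le)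
    then show False using xa by simp
  qed
  define r where "r = u \<alpha> c"
  define F where "F = {x \<in> verts r. x < \<alpha>}"
  have finF: "finite F" unfolding F_def using finite_verts[of r] by simp
  define kk where "kk = (\<lambda>x. SOME k. x < b k)"
  have kk: "\<And>x. x \<in> F \<Longrightarrow> x < b (kk x)" unfolding kk_def F_def
    using below by (metis (mono_tags, lifting) mem_Collect_eq someI_ex)
  define n where "n = Max (insert 0 (kk ` F))"
  have Fn: "\<And>x. x \<in> F \<Longrightarrow> x < b n"
  proof -
    fix x assume "x \<in> F"
    then have "kk x \<le> n" unfolding n_def using finF by simp
    then show "x < b n" using kk[OF \<open>x \<in> F\<close>] bmono order_less_le_trans by blast
  qed
  define \<beta> where "\<beta> = b n"
  define w where "w = u \<beta> c"
  define v where "v = u \<alpha> \<beta>"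
  have c\<beta>: "c < \<beta>" and \<beta>\<alpha>: "\<beta> < \<alpha>" unfolding \<beta>_def using cb ab by auto
  have wv: "\<And>x. x \<in> verts w \<Longrightarrow> x < \<alpha>"
  proof -
    fix x assume "x \<in> verts w"
    then have "x < b (Suc n)" using nx bS unfolding w_def \<beta>_def by simp
    then show "x < \<alpha>" using ab order_less_trans by blast
  qed
  have vv: "\<And>x. x \<in> verts v \<Longrightarrow> \<beta> \<le> x" unfolding v_def using np \<beta>\<alpha> by blast
  have rv: "\<And>x. x \<in> verts r \<Longrightarrow> x < \<alpha> \<Longrightarrow> x < \<beta>"
    using Fn unfolding F_def \<beta>_def by blast
  have mw: "zy_mor c \<beta> w" unfolding w_def using mor c\<beta> by simp
  have mv: "zy_mor \<beta> \<alpha> v" unfolding v_def using mor \<beta>\<alpha> by simp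
  have mr: "zy_mor c \<alpha> r" unfolding r_def using mor c\<beta> \<beta>\<alpha> by simp
  have "r = free_reduce (w @ v)" unfolding r_def w_def v_def zy_comp_def
    using coh c\<beta> \<beta>\<alpha> zy_comp_def by metis
  then obtain i j where rij: "r = take i w @ drop j v"
    using free_reduce_app mw mv unfolding zy_mor_def by blast
  define A where "A = take i w"
  define D where "D = drop j v"
  have Aw: "set A \<subseteq> set w" unfolding A_def by (rule set_take_subset)
  have Dv: "set D \<subseteq> set v" unfolding D_def by (rule set_drop_subset)
  have rAD: "r = A @ D" using rij A_def D_def by simp
  have rne: "r \<noteq> []" using mr c\<beta> \<beta>\<alpha> unfolding zy_mor_def zy_word_def by auto
  have rhd: "fst (hd r) = c" and rlast: "snd (last r) = \<alpha>"
    using mr rne unfolding zy_mor_def zy_word_def by auto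
  have chain: "\<And>k. Suc k < length r \<Longrightarrow> snd (r ! k) = fst (r ! Suc k)"
    using mr unfolding zy_mor_def zy_word_def by blast
  show False
  proof (cases "A = []")
    case True
    then have "r = D" using rAD by simp
    then have "hd r \<in> set v" using rne Dv by auto
    then have "c \<in> verts v" using rhd unfolding verts_def by force
    then show False using vv c\<beta> by fastforce
  next
    case Ane: False
    show False
    proof (cases "D = []")
      case True
      then have "r = A" using rAD by simp
      then have "last r \<in> set w" using rne Aw by auto
      then have "\<alpha> \<in> verts w" using rlast unfolding verts_def by force
      then show False using wv by blast
    next
      case Dne: False
      define k where "k = length A - 1"
      have kA: "Suc k = length A" using Ane unfolding k_def by simp
      have rk: "r ! k = last A" using Ane rAD kA
        by (metis diff_Suc_1 last_conv_nth lessI nth_append)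
      have rk1: "r ! Suc k = hd D" using Dne rAD kA
        by (simp add: hd_conv_nth nth_append)
      have "Suc k < length r" using rAD kA Dne by simp
      then have eq: "snd (last A) = fst (hd D)" using chain rk rk1 by metis
      have "last A \<in> set w" using Ane Aw by auto
      then have x1: "snd (last A) < \<alpha>" using wv unfolding verts_def by blast
      have "hd D \<in> set v" using Dne Dv by auto
      then have x2: "\<beta> \<le> fst (hd D)" using vv unfolding verts_def by blast
      have "hd D \<in> set r" using Dne rAD by simp
      then have "fst (hd D) \<in> verts r" unfolding verts_def by blast
      then have "fst (hd D) < \<beta>" using rv x1 eq by simp
      then show False using x2 by simp
    qed
  qed
qed

end
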